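(* Assume Assumption A and let $\alpha>0$. For each $\delta\ge0$, the set $D_\delta$ is positively invariant under the semiflow generated by system (S), i.e. if $(\varphi,\tau_0)\in D_\delta$ then $((A_{1,t},\dots,A_{n,t}),(\tau_1(t),\dots,\tau_n(t)))\in D_\delta$ for all $t\ge0$, where $A_{i,t}(\theta):=A_i(t+\theta)$, $\theta\le0$. Moreover, for each $\delta>0$ there exists $M(\delta)>0$, independent of the initial conditions, such that for every $(\varphi,\tau_0)\in D_\delta$ with $\varphi_i\ge0$ and $\tau_{i0}>0$ for all $i$, the corresponding solution satisfies $$\limsup_{t\to+\infty}\max_{i=1,\dots,n}A_i(t)\le M(\delta).$$
   Context: For $\alpha>0$, $X_\alpha:=\{\phi\in C((-\infty,0]): e^{-\alpha|\cdot|}\phi(\cdot)\in BUC((-\infty,0])\cap \mathrm{Lip}((-\infty,0])\}$. The $n$-species system (S): for $i=1,\dots,n$, $$A_i'(t)=-\mu_{A_i}A_i(t)+\beta_i e^{-\mu_{J_i}\tau_i(t)}\frac{f_i(Z_i(t))}{f_i(Z_i(t-\tau_i(t)))}A_i(t-\tau_i(t)),\quad t\ge0,$$ $$\int_{t-\tau_i(t)}^{t}f_i(Z_i(\sigma))\,d\sigma=\int_{-\tau_{i0}}^{0}f_i(Z_{i\varphi}(\sigma))\,d\sigma,\quad t\ge0,$$ with $A_i(t)=\varphi_i(t)$ for $t\le0$, $\tau_i(0)=\tau_{i0}\ge0$, where $Z_i(t)=\sum_{j=1}^n\zeta_{ij}A_j(t)$, $Z_{i\varphi}(t)=\sum_{j=1}^n\zeta_{ij}\varphi_j(t)$,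 $\zeta_{ij}\ge0$. A solution consists of continuous $A_i:\mathbb{R}\to[0,\infty)$, differentiable on $[0,\infty)$, and $\tau_i:[0,\infty)\to[0,\infty)$ satisfying these equations for all $t\ge0$. Assumption A: for each $i$, (i) $\mu_{A_i}>0$, $\mu_{J_i}>0$, $\beta_i>0$, $\zeta_{ii}>0$; (ii) $f_i:\mathbb{R}\to(0,\infty)$ is Lipschitz continuous and continuously differentiable with $f_i>0$, $f_i'\le0$ on $\mathbb{R}$, $\lim_{x\to+\infty}f_i(x)=0$, and $\sup_{x\ge0}\frac{f_i(x)}{f_i(cx)}<+\infty$ for every $c\ge1$. For $\delta\ge0$, $D_\delta:=\{(\varphi,\tau_0)\in X_\alpha^n\times[0,+\infty)^n: \int_{-\tau_{i0}}^0 f_i(Z_{i\varphi}(\sigma))\,d\sigma\ge\delta\ \ \forall i=1,\dots,n\}$, with $\varphi=(\varphi_1,\dots,\varphi_n)$, $\tau_0=(\tau_{10},\dots,\tau_{n0})$. *)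

theory Defs
  imports "HOL-Analysis.Analysis"
begin

definition X_space :: "real \<Rightarrow> (real \<Rightarrow> real) set" where
  "X_space \<alpha> = {\<phi>. continuous_on {..0} \<phi> \<and>
     bounded ((\<lambda>\<theta>. exp (- \<alpha> * \<bar>\<theta>\<bar>) * \<phi> \<theta>) ` {..0}) \<and>
     uniformly_continuous_on {..0} (\<lambda>\<theta>. exp (- \<alpha> * \<bar>\<theta>\<bar>) * \<phi> \<theta>) \<and>
     (\<exists>L. L-lipschitz_on {..0} (\<lambda>\<theta>. exp (- \<alpha> * \<bar>\<theta>\<bar>) * \<phi> \<theta>))}"

definition Zfun :: "('n::finite \<Rightarrow> 'n \<Rightarrow> real) \<Rightarrow> ('n \<Rightarrow> real \<Rightarrow> real) \<Rightarrow> 'n \<Rightarrow> real \<Rightarrow> real" where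
  "Zfun \<zeta> A i t = (\<Sum>j\<in>UNIV. \<zeta> i j * A j t)"

definition assumptionA ::
  "('n::finite \<Rightarrow> real) \<Rightarrow> ('n \<Rightarrow> real) \<Rightarrow> ('n \<Rightarrow> real) \<Rightarrow> ('n \<Rightarrow> 'n \<Rightarrow> real)
   \<Rightarrow> ('n \<Rightarrow> real \<Rightarrow> real) \<Rightarrow> bool" where
  "assumptionA \<mu>A \<mu>J \<beta> \<zeta> f \<longleftrightarrow>
    (\<forall>i j. \<zeta> i j \<ge> 0) \<and>
    (\<forall>i. \<mu>A i > 0 \<and> \<mu>J i > 0 \<and> \<beta> i > 0 \<and> \<zeta> i i > 0 \<and>
       (\<exists>L. L-lipschitz_on UNIV (f i)) \<and>
       (f i) C1_differentiable_on UNIV \<and>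
       (\<forall>x. f i x > 0) \<and> (\<forall>x. deriv (f i) x \<le> 0) \<and>
       ((f i) \<longlongrightarrow> 0) at_top \<and>
       (\<forall>c::real. c \<ge> 1 \<longrightarrow> (\<exists>K. \<forall>x\<ge>0. f i x / f i (c * x) \<le> K)))"

definition D_set :: "real \<Rightarrow> ('n::finite \<Rightarrow> 'n \<Rightarrow> real) \<Rightarrow> ('n \<Rightarrow> real \<Rightarrow> real) \<Rightarrow> real
   \<Rightarrow> (('n \<Rightarrow> real \<Rightarrow> real) \<times> ('n \<Rightarrow> real)) set" where
  "D_set \<alpha> \<zeta> f \<delta> = {(\<phi>, \<tau>0). (\<forall>i. \<phi> i \<in> X_space \<alpha>) \<and> (\<forall>i. \<tau>0 i \<ge> 0) \<and>
      (\<forall>i. integral {- \<tau>0 i..0} (\<lambda>\<sigma>. f i (Zfun \<zeta> \<phi> i \<sigma>)) \<ge> \<delta>)}"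

text \<open>A solution (A, tau) of system (S) with initial data (phi, tau0).
  Differentiability on [0,infinity) is one-sided at 0.\<close>
definition is_solution ::
  "('n::finite \<Rightarrow> real) \<Rightarrow> ('n \<Rightarrow> real) \<Rightarrow> ('n \<Rightarrow> real) \<Rightarrow> ('n \<Rightarrow> 'n \<Rightarrow> real)
   \<Rightarrow> ('n \<Rightarrow> real \<Rightarrow> real) \<Rightarrow> ('n \<Rightarrow> real \<Rightarrow> real) \<Rightarrow> ('n \<Rightarrow> real)
   \<Rightarrow> ('n \<Rightarrow> real \<Rightarrow> real) \<Rightarrow> ('n \<Rightarrow> real \<Rightarrow> real) \<Rightarrow> bool" where
  "is_solution \<mu>A \<mu>J \<beta> \<zeta> f \<phi> \<tau>0 A \<tau> \<longleftrightarrow>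
    (\<forall>i. continuous_on UNIV (A i)) \<and>
    (\<forall>i t. A i t \<ge> 0) \<and>
    (\<forall>i t. t \<le> 0 \<longrightarrow> A i t = \<phi> i t) \<and>
    (\<forall>i. \<tau> i 0 = \<tau>0 i) \<and>
    (\<forall>i t. t \<ge> 0 \<longrightarrow> \<tau> i t \<ge> 0) \<and>
    (\<forall>i t. t \<ge> 0 \<longrightarrow>
       (A i has_real_derivative
          (- \<mu>A i * A i t + \<beta> i * exp (- \<mu>J i * \<tau> i t)
             * (f i (Zfun \<zeta> A i t) / f i (Zfun \<zeta> A i (t - \<tau> i t))) * A i (t - \<tau> i t)))
       (at t within {0..})) \<and>
    (\<forall>i t. t \<ge> 0 \<longrightarrow>
       integral {t - \<tau> i t..t} (\<lambda>\<sigma>. f i (Zfun \<zeta> A i \<sigma>))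
       = integral {- \<tau>0 i..0} (\<lambda>\<sigma>. f i (Zfun \<zeta> \<phi> i \<sigma>)))"

end

theory Submission
  imports Defs
begin


lemma int_lower:
  fixes h :: "real \<Rightarrow> real"
  assumes "continuous_on {a..b} h" "a \<le> b" "\<And>x. x \<in> {a..b} \<Longrightarrow> m \<le> h x"
  shows "m * (b - a) \<le> integral {a..b} h"
proof -
  have "integral {a..b} (\<lambda>x. m) \<le> integral {a..b} h"
    by (rule integral_le) (auto intro: integrable_continuous_interval assms)
  thus ?thesis using assms(2) by (simp add: mult.commute)
qed

lemma int_upper:
  fixes h :: "real \<Rightarrow> real"
  assumes "continuous_on {a..b} h" "a \<le> b" "\<And>x. x \<in> {a..b} \<Longrightarrow> h x \<le> m"
  shows "integral {a..b} h \<le> m * (b - a)"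
proof -
  have "integral {a..b} h \<le> integral {a..b} (\<lambda>x. m)"
    by (rule integral_le) (auto intro: integrable_continuous_interval assms)
  thus ?thesis using assms(2) by (simp add: mult.commute)
qed

lemma int_pos:
  fixes h :: "real \<Rightarrow> real"
  assumes "continuous_on {a..b} h" "a < b" "\<And>x. x \<in> {a..b} \<Longrightarrow> 0 < h x"
  shows "0 < integral {a..b} h"
proof -
  obtain x0 where x0: "x0 \<in> {a..b}" "\<And>y. y \<in> {a..b} \<Longrightarrow> h x0 \<le> h y"
    using continuous_attains_inf[of "{a..b}" h] assms by auto
  have "h x0 * (b - a) \<le> integral {a..b} h"
    by (rule int_lower) (use assms x0 in auto)
  moreover have "0 < h x0 * (b - a)" using assms x0 by auto
  ultimately show ?thesis by linarith
qed

lemma int_nonneg: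
  fixes h :: "real \<Rightarrow> real"
  assumes "continuous_on {a..b} h" "\<And>x. x \<in> {a..b} \<Longrightarrow> 0 \<le> h x"
  shows "0 \<le> integral {a..b} h"
  by (rule integral_nonneg) (auto intro: integrable_continuous_interval assms)

locale sys =
  fixes \<mu>A \<mu>J \<beta> :: "'n::finite \<Rightarrow> real" and \<zeta> :: "'n \<Rightarrow> 'n \<Rightarrow> real"
    and f :: "'n \<Rightarrow> real \<Rightarrow> real" and \<phi> :: "'n \<Rightarrow> real \<Rightarrow> real" and \<tau>0 :: "'n \<Rightarrow> real"
    and A :: "'n \<Rightarrow> real \<Rightarrow> real" and \<tau> :: "'n \<Rightarrow> real \<Rightarrow> real"
  assumes AA: "assumptionA \<mu>A \<mu>J \<beta> \<zeta> f"
    and sol: "is_solution \<mu>A \<mu>J \<beta> \<zeta> f \<phi> \<tau>0 A \<tau>"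
    and tau0: "\<And>i. \<tau>0 i \<ge> 0"
begin

lemma zeta_nn: "\<zeta> i j \<ge> 0" using AA unfolding assumptionA_def by auto
lemma params: "\<mu>A i > 0" "\<mu>J i > 0" "\<beta> i > 0" "\<zeta> i i > 0"
  using AA unfolding assumptionA_def by auto
lemma f_pos: "f i x > 0" using AA unfolding assumptionA_def by auto
lemma f_lim: "(f i \<longlongrightarrow> 0) at_top" using AA unfolding assumptionA_def by auto
lemma f_ratio: "c \<ge> 1 \<Longrightarrow> \<exists>K. \<forall>x\<ge>0. f i x / f i (c * x) \<le> K"
  using AA unfolding assumptionA_def by auto
lemma f_cont: "continuous_on UNIV (f i)"
proof -
  obtain L where "L-lipschitz_on UNIV (f i)" using AA unfolding assumptionA_def by blast
  thus ?thesis by (rule lipschitz_on_continuous_on)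
qed
lemma f_dec: assumes "x \<le> y" shows "f i y \<le> f i x"
proof -
  have d: "\<And>z. f i differentiable at z" using AA unfolding assumptionA_def C1_differentiable_on_eq by auto
  have "\<And>z. deriv (f i) z \<le> 0" using AA unfolding assumptionA_def by auto
  show ?thesis
    by (rule DERIV_nonpos_imp_nonincreasing[OF assms])
       (use d \<open>\<And>z. deriv (f i) z \<le> 0\<close> DERIV_deriv_iff_real_differentiable in blast)
qed

lemma A_cont: "continuous_on UNIV (A i)" using sol unfolding is_solution_def by auto
lemma A_nn: "A i t \<ge> 0" using sol unfolding is_solution_def by auto
lemma A_init: "t \<le> 0 \<Longrightarrow> A i t = \<phi> i t" using sol unfolding is_solution_def by auto
lemma tau_init: "\<tau> i 0 = \<tau>0 i" using sol unfolding is_solution_def by auto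
lemma tau_nn: "t \<ge> 0 \<Longrightarrow> \<tau> i t \<ge> 0" using sol unfolding is_solution_def by auto

definition g where "g i t = f i (Zfun \<zeta> A i t)"
definition S where "S i = (\<Sum>j\<in>UNIV. \<zeta> i j)"
definition c where "c i = integral {- \<tau>0 i..0} (\<lambda>\<sigma>. f i (Zfun \<zeta> \<phi> i \<sigma>))"
definition Bd where "Bd i t = - \<mu>A i * A i t + \<beta> i * exp (- \<mu>J i * \<tau> i t)
             * (g i t / g i (t - \<tau> i t)) * A i (t - \<tau> i t)"

lemma A_deriv: "t \<ge> 0 \<Longrightarrow> (A i has_real_derivative Bd i t) (at t within {0..})"
  using sol unfolding is_solution_def Bd_def g_def by auto

lemma A_deriv_at: assumes "t > 0" shows "(A i has_real_derivative Bd i t) (at t)"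
proof -
  have "(A i has_real_derivative Bd i t) (at t within {0<..})"
    by (rule DERIV_subset[OF A_deriv]) (use assms in auto)
  thus ?thesis using at_within_open[of t "{0<..}"] assms by auto
qed

lemma Z_cont: "continuous_on UNIV (Zfun \<zeta> A i)"
  unfolding Zfun_def by (intro continuous_intros A_cont)
lemma g_cont: "continuous_on X (g i)"
  unfolding g_def
  by (rule continuous_on_subset[OF continuous_on_compose2[OF f_cont Z_cont]]) auto
lemma g_pos: "g i t > 0" unfolding g_def by (rule f_pos)
lemma Z_ge: "\<zeta> i i * A i t \<le> Zfun \<zeta> A i t"
proof -
  show ?thesis unfolding Zfun_def
    using sum_mono2[of UNIV "{i}" "\<lambda>j. \<zeta> i j * A j t"] zeta_nn A_nn by auto
qed
lemma Z_nn: "0 \<le> Zfun \<zeta> A i t"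
  unfolding Zfun_def using zeta_nn A_nn by (auto intro: sum_nonneg)
lemma Z_le: assumes "\<And>j. A j t \<le> Q" shows "Zfun \<zeta> A i t \<le> S i * Q"
  unfolding Zfun_def S_def sum_distrib_right
  by (rule sum_mono) (use zeta_nn assms in \<open>auto intro: mult_left_mono\<close>)
lemma S_ge: "\<zeta> i i \<le> S i"
  unfolding S_def using sum_mono2[of UNIV "{i}" "\<zeta> i"] zeta_nn by auto
lemma g_le0: "g i t \<le> f i 0" unfolding g_def by (rule f_dec[OF Z_nn])

lemma c_eq: "c i = integral {- \<tau>0 i..0} (g i)"
  unfolding c_def g_def
  by (rule integral_cong) (auto simp: Zfun_def A_init)

lemma int_eq: "t \<ge> 0 \<Longrightarrow> integral {t - \<tau> i t..t} (g i) = c i"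
  using sol unfolding is_solution_def g_def c_def by auto

end



lemma mvt_nondec:
  fixes x :: "real \<Rightarrow> real"
  assumes "a \<le> b" "continuous_on {a..b} x"
    and "\<And>z. a < z \<Longrightarrow> z < b \<Longrightarrow> \<exists>D. (x has_real_derivative D) (at z) \<and> D \<ge> 0"
  shows "x a \<le> x b"
proof (cases "a = b")
  case False
  then have "a < b" using assms by auto
  have "\<And>z. a < z \<Longrightarrow> z < b \<Longrightarrow> x differentiable (at z)"
    using assms(3) real_differentiable_def by blast
  then obtain l z where lz: "a < z" "z < b" "(x has_real_derivative l) (at z)" "x b - x a = (b - a) * l"
    using MVT[OF \<open>a < b\<close> assms(2)] by blast
  obtain D where "(x has_real_derivative D) (at z)" "D \<ge> 0" using assms(3) lz by blast
  then have "l \<ge> 0" using DERIV_unique lz(3) by blast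
  then have "(b - a) * l \<ge> 0" using \<open>a < b\<close> by simp
  then show ?thesis using lz(4) by linarith
qed simp

lemma stay_below:
  fixes x :: "real \<Rightarrow> real"
  assumes cont: "continuous_on UNIV x"
    and der: "\<And>z. z > T \<Longrightarrow> x z \<ge> L0 \<Longrightarrow> \<exists>D. (x has_real_derivative D) (at z) \<and> D \<le> 0"
    and s1: "s1 \<ge> T" "x s1 \<le> L0"
  shows "\<forall>s\<ge>s1. x s \<le> L0"
proof (rule ccontr)
  assume "\<not> ?thesis"
  then obtain s where s: "s \<ge> s1" "x s > L0" by auto
  define K where "K = {v\<in>{s1..s}. x v \<le> L0}"
  have "closed K" unfolding K_def
    using continuous_closed_preimage[of "{s1..s}" x "{..L0}"] continuous_on_subset[OF cont]
    by (auto simp: vimage_def Int_def)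
  moreover have "K \<noteq> {}" "bdd_above K" using s s1 unfolding K_def by (auto intro: bdd_aboveI[of _ s])
  ultimately have t2: "Sup K \<in> K" using closed_contains_Sup by blast
  define t2 where "t2 = Sup K"
  have t2K: "t2 \<in> K" using t2 t2_def by simp
  have "\<And>v. v \<in> K \<Longrightarrow> v \<le> t2" unfolding t2_def using \<open>bdd_above K\<close> by (simp add: cSup_upper)
  have above: "x v > L0" if "t2 < v" "v \<le> s" for v
  proof (rule ccontr)
    assume "\<not> x v > L0"
    then have "v \<in> K" using that t2K unfolding K_def by auto
    then have "v \<le> t2" using \<open>\<And>v. v \<in> K \<Longrightarrow> v \<le> t2\<close> by blast
    then show False using that by simp
  qed
  have "t2 < s" using t2K s unfolding K_def by (cases "t2 = s") auto
  have "- x t2 \<le> - x s"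
  proof (rule mvt_nondec[of t2 s "\<lambda>v. - x v"])
    show "t2 \<le> s" using \<open>t2 < s\<close> by simp
    show "continuous_on {t2..s} (\<lambda>v. - x v)"
      by (intro continuous_intros continuous_on_subset[OF cont]) auto
    fix z assume z: "t2 < z" "z < s"
    have "z > T" using z t2K s1 unfolding K_def by auto
    obtain D where "(x has_real_derivative D) (at z)" "D \<le> 0"
      using der[OF \<open>z > T\<close>] above[of z] z by force
    then show "\<exists>D. ((\<lambda>v. - x v) has_real_derivative D) (at z) \<and> 0 \<le> D"
      by (intro exI[of _ "-D"]) (auto intro: derivative_intros)
  qed
  then show False using t2K s unfolding K_def by auto
qed

lemma eventually_below:
  fixes x :: "real \<Rightarrow> real"
  assumes cont: "continuous_on UNIV x" and kap: "\<kappa> > 0"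
    and der: "\<And>z. z > T \<Longrightarrow> x z \<ge> L0 \<Longrightarrow> \<exists>D. (x has_real_derivative D) (at z) \<and> D \<le> - \<kappa>"
  shows "\<exists>T'. \<forall>s\<ge>T'. x s \<le> L0"
proof -
  define T1 where "T1 = T + 1"
  define H where "H = \<bar>x T1 - L0\<bar> / \<kappa> + 1"
  have kH: "\<kappa> * H = \<bar>x T1 - L0\<bar> + \<kappa>" using kap unfolding H_def by (simp add: field_simps)
  have H: "H > 0" "\<kappa> * H > x T1 - L0"
    using kap kH unfolding H_def by (auto intro: add_nonneg_pos)
  have "\<exists>s1\<in>{T1..T1+H}. x s1 \<le> L0"
  proof (rule ccontr)
    assume "\<not> ?thesis"
    then have gt: "\<And>v. v \<in> {T1..T1+H} \<Longrightarrow> x v > L0" by force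
    have "- x T1 - \<kappa> * T1 \<le> - x (T1 + H) - \<kappa> * (T1 + H)"
    proof (rule mvt_nondec[of T1 "T1 + H" "\<lambda>v. - x v - \<kappa> * v"])
      show "T1 \<le> T1 + H" using H by simp
      show "continuous_on {T1..T1 + H} (\<lambda>v. - x v - \<kappa> * v)"
        by (intro continuous_intros continuous_on_subset[OF cont]) auto
      fix z assume z: "T1 < z" "z < T1 + H"
      obtain D where "(x has_real_derivative D) (at z)" "D \<le> -\<kappa>"
        using der[of z] gt[of z] z unfolding T1_def by force
      then show "\<exists>D. ((\<lambda>v. - x v - \<kappa> * v) has_real_derivative D) (at z) \<and> 0 \<le> D"
        by (intro exI[of _ "- D - \<kappa>"]) (auto intro!: derivative_eq_intros)
    qed
    moreover have "x (T1 + H) > L0" using gt H by auto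
    ultimately show False
      using H by (simp add: algebra_simps)
  qed
  then obtain s1 where "s1 \<ge> T1" "x s1 \<le> L0" by auto
  moreover have "\<exists>D. (x has_real_derivative D) (at z) \<and> D \<le> 0" if zz: "z > T" "x z \<ge> L0" for z
  proof -
    obtain D where "(x has_real_derivative D) (at z)" "D \<le> -\<kappa>" using der zz by blast
    then show ?thesis using kap by (intro exI[of _ D]) auto
  qed
  ultimately show ?thesis
    using stay_below[OF cont, of T L0 s1] unfolding T1_def by auto
qed




context sys begin

lemma g_int: "g i integrable_on {a..b}"
  by (rule integrable_continuous_interval[OF g_cont])

lemma a_lower: assumes "t \<ge> 0" shows "- \<tau>0 i \<le> t - \<tau> i t"
proof (rule ccontr)
  define u where "u = t - \<tau> i t"
  assume "\<not> - \<tau>0 i \<le> t - \<tau> i t"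
  then have u: "u < - \<tau>0 i" unfolding u_def by simp
  have i1: "integral {u..- \<tau>0 i} (g i) + integral {- \<tau>0 i..t} (g i) = integral {u..t} (g i)"
    by (rule Henstock_Kurzweil_Integration.integral_combine) (use u tau0[of i] assms g_int in auto)
  have i2: "integral {- \<tau>0 i..0} (g i) + integral {0..t} (g i) = integral {- \<tau>0 i..t} (g i)"
    by (rule Henstock_Kurzweil_Integration.integral_combine) (use u tau0[of i] assms g_int in auto)
  have p: "0 < integral {u..- \<tau>0 i} (g i)"
    by (rule int_pos[OF g_cont]) (use u g_pos in auto)
  have n: "0 \<le> integral {0..t} (g i)"
    by (rule int_nonneg[OF g_cont]) (use g_pos less_imp_le in auto)
  have "integral {u..t} (g i) = c i" using int_eq[OF assms] u_def by simp
  then show False using i1 i2 p n c_eq[of i] by linarith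
qed

lemma tau_pos: assumes "t \<ge> 0" "c i > 0" shows "\<tau> i t > 0"
proof (rule ccontr)
  assume "\<not> \<tau> i t > 0"
  then have "\<tau> i t = 0" using tau_nn[OF assms(1), of i] by simp
  then show False using int_eq[OF assms(1), of i] assms(2) by simp
qed

lemma birth_nn: "t \<ge> 0 \<Longrightarrow> 0 \<le> Bd i t + \<mu>A i * A i t"
proof -
  have "0 \<le> \<beta> i * exp (- \<mu>J i * \<tau> i t) * (g i t / g i (t - \<tau> i t)) * A i (t - \<tau> i t)"
    using params[of i] g_pos[of i t] g_pos[of i "t - \<tau> i t"] A_nn[of i "t - \<tau> i t"]
    by (intro mult_nonneg_nonneg divide_nonneg_nonneg) auto
  then show ?thesis unfolding Bd_def by simp
qed

lemma Bd_le: assumes "g i t / g i (t - \<tau> i t) \<le> R"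
  shows "Bd i t \<le> - \<mu>A i * A i t + \<beta> i * exp (- \<mu>J i * \<tau> i t) * R * A i (t - \<tau> i t)"
proof -
  have "0 \<le> \<beta> i * exp (- \<mu>J i * \<tau> i t) * A i (t - \<tau> i t)" using params[of i] A_nn by auto
  then have "\<beta> i * exp (- \<mu>J i * \<tau> i t) * A i (t - \<tau> i t) * (g i t / g i (t - \<tau> i t))
     \<le> \<beta> i * exp (- \<mu>J i * \<tau> i t) * A i (t - \<tau> i t) * R"
    by (rule mult_left_mono[OF assms])
  then show ?thesis unfolding Bd_def by (simp add: algebra_simps)
qed

lemma decay: assumes "0 \<le> u" "u \<le> v" shows "A i u * exp (- \<mu>A i * (v - u)) \<le> A i v"
proof -
  have "(\<lambda>s. exp (\<mu>A i * s) * A i s) u \<le> (\<lambda>s. exp (\<mu>A i * s) * A i s) v"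
  proof (rule mvt_nondec[OF assms(2)])
    show "continuous_on {u..v} (\<lambda>s. exp (\<mu>A i * s) * A i s)"
      by (intro continuous_intros continuous_on_subset[OF A_cont]) auto
    fix z assume z: "u < z" "z < v"
    have "z > 0" using z assms by simp
    have "((\<lambda>s. exp (\<mu>A i * s) * A i s) has_real_derivative
          exp (\<mu>A i * z) * (Bd i z + \<mu>A i * A i z)) (at z)"
      by (rule derivative_eq_intros A_deriv_at[OF \<open>z > 0\<close>] refl)+ (simp add: algebra_simps)
    moreover have "0 \<le> exp (\<mu>A i * z) * (Bd i z + \<mu>A i * A i z)"
      using birth_nn[of z i] \<open>z > 0\<close> by simp
    ultimately show "\<exists>D. ((\<lambda>s. exp (\<mu>A i * s) * A i s) has_real_derivative D) (at z) \<and> 0 \<le> D"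
      by blast
  qed
  then have "exp (\<mu>A i * u) * A i u * exp (- \<mu>A i * v) \<le> exp (\<mu>A i * v) * A i v * exp (- \<mu>A i * v)"
    by (intro mult_right_mono) auto
  moreover have "exp (\<mu>A i * u) * A i u * exp (- \<mu>A i * v) = A i u * exp (- \<mu>A i * (v - u))"
    by (simp add: algebra_simps flip: exp_add)
  moreover have "exp (\<mu>A i * v) * A i v * exp (- \<mu>A i * v) = A i v"
    by (simp add: algebra_simps flip: exp_add)
  ultimately show ?thesis by linarith
qed

lemma tau_upper: assumes "t \<ge> 0" "\<And>j v. - \<tau>0 i \<le> v \<Longrightarrow> v \<le> t \<Longrightarrow> A j v \<le> Q"
  shows "\<tau> i t * f i (S i * Q) \<le> c i"
proof -
  have "f i (S i * Q) * (t - (t - \<tau> i t)) \<le> integral {t - \<tau> i t..t} (g i)"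
  proof (rule int_lower[OF g_cont])
    show "t - \<tau> i t \<le> t" using tau_nn[OF assms(1)] by simp
    fix x assume x: "x \<in> {t - \<tau> i t..t}"
    then have "- \<tau>0 i \<le> x" using a_lower[OF assms(1), of i] by auto
    then have "Zfun \<zeta> A i x \<le> S i * Q" using x assms(2) by (intro Z_le) auto
    then show "f i (S i * Q) \<le> g i x" unfolding g_def by (rule f_dec)
  qed
  then show ?thesis using int_eq[OF assms(1)] by (simp add: mult.commute)
qed

lemma tau_lower: assumes "t \<ge> 0" "0 \<le> t - \<tau> i t" "L > 0"
    "L * f i (\<zeta> i i * Kb * exp (- \<mu>A i * L)) < c i" "Kb \<le> A i (t - \<tau> i t)"
  shows "\<tau> i t > L"
proof (rule ccontr)
  assume "\<not> \<tau> i t > L"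
  then have tl: "\<tau> i t \<le> L" by simp
  define u where "u = t - \<tau> i t"
  have "integral {u..t} (g i) \<le> f i (\<zeta> i i * Kb * exp (- \<mu>A i * L)) * (t - u)"
  proof (rule int_upper[OF g_cont])
    show "u \<le> t" using tau_nn[OF assms(1)] u_def by simp
    fix v assume v: "v \<in> {u..t}"
    have e: "exp (- \<mu>A i * L) \<le> exp (- \<mu>A i * (v - u))"
      using v tl params[of i] u_def by (auto intro!: mult_left_mono)
    have "Kb * exp (- \<mu>A i * L) \<le> A i u * exp (- \<mu>A i * L)"
      using assms(5) u_def by (intro mult_right_mono) auto
    also have "\<dots> \<le> A i u * exp (- \<mu>A i * (v - u))"
      using e A_nn by (intro mult_left_mono) auto
    also have "\<dots> \<le> A i v" using decay[of u v i] v assms(2) u_def by auto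
    finally have "\<zeta> i i * (Kb * exp (- \<mu>A i * L)) \<le> \<zeta> i i * A i v"
      using params[of i] by (intro mult_left_mono) auto
    also have "\<dots> \<le> Zfun \<zeta> A i v" by (rule Z_ge)
    finally show "g i v \<le> f i (\<zeta> i i * Kb * exp (- \<mu>A i * L))"
      unfolding g_def by (intro f_dec) (simp add: mult.assoc)
  qed
  also have "\<dots> \<le> f i (\<zeta> i i * Kb * exp (- \<mu>A i * L)) * L"
    using tl u_def f_pos[of i] by (intro mult_left_mono) (auto intro: less_imp_le)
  finally show False using int_eq[OF assms(1), of i] u_def assms(4) by (simp add: mult.commute)
qed

end



locale bnd = sys +
  fixes \<delta> :: real and R L Kb
  assumes dpos: "\<delta> > 0" and dle0: "\<And>i. \<delta> \<le> integral {- \<tau>0 i..0} (\<lambda>\<sigma>. f i (Zfun \<zeta> \<phi> i \<sigma>))"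
    and Rge: "\<And>i. R i \<ge> 1"
    and Rrat0: "\<And>i x. x \<ge> 0 \<Longrightarrow> f i x / f i ((2 * (\<Sum>j\<in>UNIV. \<zeta> i j) / \<zeta> i i) * x) \<le> R i"
    and Lpos: "\<And>i. L i > 0"
    and Lsmall: "\<And>i. \<beta> i * R i * exp (- \<mu>J i * L i) \<le> \<mu>A i / 4"
    and Kbnn: "\<And>i. Kb i \<ge> 0"
    and Kbig: "\<And>i. L i * f i (\<zeta> i i * Kb i * exp (- \<mu>A i * L i)) < \<delta>"
begin

lemma dle: "\<delta> \<le> c i" using dle0 unfolding c_def by auto
lemma Rrat: "x \<ge> 0 \<Longrightarrow> f i ((2 * S i / \<zeta> i i) * x) \<le> R i * f i ((2 * S i / \<zeta> i i) * x) \<and> f i x / f i ((2 * S i / \<zeta> i i) * x) \<le> R i"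
  using Rrat0[of x i] Rge[of i] f_pos[of i] unfolding S_def by auto

lemma cpos: "c i > 0" using dpos dle[of i] by linarith

lemma ratio_bound:
  assumes "0 \<le> K" "K \<le> A i t" "\<And>j. A j u \<le> 2 * K"
  shows "g i t / g i u \<le> R i"
proof -
  have zi: "0 < \<zeta> i i" using params by auto
  have "g i t \<le> f i (\<zeta> i i * K)" unfolding g_def
    using Z_ge[of i t] assms(2) zi by (intro f_dec) (smt (verit) mult_left_mono)
  moreover have "f i ((2 * S i / \<zeta> i i) * (\<zeta> i i * K)) \<le> g i u" unfolding g_def
  proof (rule f_dec)
    have "Zfun \<zeta> A i u \<le> S i * (2 * K)" by (rule Z_le[OF assms(3)])
    also have "\<dots> = (2 * S i / \<zeta> i i) * (\<zeta> i i * K)" using zi by (simp add: field_simps)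
    finally show "Zfun \<zeta> A i u \<le> (2 * S i / \<zeta> i i) * (\<zeta> i i * K)" .
  qed
  ultimately have "g i t / g i u \<le> f i (\<zeta> i i * K) / f i ((2 * S i / \<zeta> i i) * (\<zeta> i i * K))"
    using f_pos g_pos by (intro frac_le) (auto intro: less_imp_le)
  also have "\<dots> \<le> R i" using Rrat[of "\<zeta> i i * K" i] zi assms(1) by auto
  finally show ?thesis .
qed

lemma term_bound:
  assumes t: "t \<ge> 0" and P: "A i (t - \<tau> i t) \<le> P"
    and Phi: "t - \<tau> i t < 0 \<Longrightarrow> A i (t - \<tau> i t) \<le> \<Phi>" "\<Phi> \<ge> 0"
  shows "\<beta> i * exp (- \<mu>J i * \<tau> i t) * R i * A i (t - \<tau> i t)
     \<le> max (\<mu>A i / 4 * P) (\<beta> i * R i * max (Kb i) \<Phi>)"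
proof -
  define u where "u = t - \<tau> i t"
  have b: "\<beta> i > 0" "R i > 0" using params Rge[of i] by auto
  have e1: "exp (- \<mu>J i * \<tau> i t) \<le> 1" using tau_nn[OF t, of i] params[of i] by simp
  have Au: "A i u \<ge> 0" by (rule A_nn)
  consider "u < 0" | "u \<ge> 0" "Kb i \<le> A i u" | "u \<ge> 0" "A i u < Kb i" by linarith
  then show ?thesis
  proof cases
    case 1
    have "\<beta> i * exp (- \<mu>J i * \<tau> i t) * R i * A i u \<le> \<beta> i * 1 * R i * \<Phi>"
      using b e1 Au Phi(1) 1 u_def by (intro mult_mono) auto
    also have "\<dots> \<le> \<beta> i * R i * max (Kb i) \<Phi>" using b by (simp add: mult_left_mono)
    finally show ?thesis unfolding u_def by simp
  next
    case 2
    have "\<tau> i t > L i"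
      by (rule tau_lower[OF t _ Lpos, where Kb="Kb i"]) (use 2 u_def Kbig[of i] dle[of i] in auto)
    then have "exp (- \<mu>J i * \<tau> i t) \<le> exp (- \<mu>J i * L i)" using params[of i] by simp
    then have "\<beta> i * exp (- \<mu>J i * \<tau> i t) * R i * A i u \<le> \<beta> i * exp (- \<mu>J i * L i) * R i * P"
      using b Au P u_def by (intro mult_mono) auto
    also have "\<dots> \<le> \<mu>A i / 4 * P"
      using Lsmall[of i] P Au u_def by (intro mult_right_mono) (auto simp: algebra_simps)
    finally show ?thesis unfolding u_def by simp
  next
    case 3
    have "\<beta> i * exp (- \<mu>J i * \<tau> i t) * R i * A i u \<le> \<beta> i * 1 * R i * Kb i"
      using b e1 Au 3 by (intro mult_mono) auto
    also have "\<dots> \<le> \<beta> i * R i * max (Kb i) \<Phi>" using b by (simp add: mult_left_mono)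
    finally show ?thesis unfolding u_def by simp
  qed
qed

end



context bnd begin

lemma first_passage_contra:
  assumes Qd: "\<And>i. \<mu>A i / 4 * Q + \<beta> i * R i * max (Kb i) \<Phi> < \<mu>A i * Q"
    and Phi: "\<Phi> \<ge> 0" "\<Phi> < Q"
    and neg: "\<And>j v. v \<le> 0 \<Longrightarrow> - \<tau>0 j \<le> v \<Longrightarrow> A j v \<le> \<Phi>"
    and neg2: "\<And>j i v. v \<le> 0 \<Longrightarrow> - \<tau>0 i \<le> v \<Longrightarrow> A j v \<le> \<Phi>"
  shows "A i s < Q \<or> s < 0"
proof (rule ccontr)
  assume "\<not> (A i s < Q \<or> s < 0)"
  then have s: "s \<ge> 0" "Q \<le> A i s" by auto
  define F where "F = {s\<in>{0..}. \<exists>i. Q \<le> A i s}"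
  have F_eq: "F = (\<Union>i. {0..} \<inter> (A i -` {Q..}))" unfolding F_def by auto
  have cv: "closed (A i -` {Q..})" for i
  proof (rule continuous_closed_vimage)
    fix x show "continuous (at x) (A i)"
      using A_cont[of i] continuous_on_eq_continuous_at[of UNIV "A i"] by auto
  qed simp
  have "closed F" unfolding F_eq
    by (intro closed_UN) (auto intro: closed_Int cv)
  moreover have "F \<noteq> {}" "bdd_below F" using s unfolding F_def by (auto intro: bdd_belowI[of _ 0])
  ultimately have "Inf F \<in> F" using closed_contains_Inf by blast
  define t1 where "t1 = Inf F"
  have t1F: "t1 \<in> F" using \<open>Inf F \<in> F\<close> t1_def by simp
  have before: "A j v < Q" if "0 \<le> v" "v < t1" for j v
  proof (rule ccontr)
    assume "\<not> A j v < Q"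
    then have "v \<in> F" using that unfolding F_def by (auto simp: not_less)
    then have "t1 \<le> v" unfolding t1_def using \<open>bdd_below F\<close> by (simp add: cInf_lower)
    then show False using that by simp
  qed
  obtain k where k: "Q \<le> A k t1" "t1 \<ge> 0" using t1F unfolding F_def by auto
  have "t1 \<noteq> 0"
  proof
    assume "t1 = 0"
    then have "A k t1 \<le> \<Phi>" using neg[of t1 k] tau0[of k] by auto
    then show False using k Phi by simp
  qed
  then have t1p: "t1 > 0" using k by simp
  define u where "u = t1 - \<tau> k t1"
  have "\<tau> k t1 > 0" by (rule tau_pos[OF k(2) cpos])
  then have ult: "u < t1" unfolding u_def by simp
  have ulow: "- \<tau>0 k \<le> u" unfolding u_def by (rule a_lower[OF k(2)])
  have Aju: "A j u \<le> Q" for j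
  proof (cases "u < 0")
    case True then show ?thesis using neg2[of u k j] ulow Phi by auto
  next
    case False then show ?thesis using before[of u j] ult by auto
  qed
  have Q0: "Q \<ge> 0" using Phi by simp
  have rat: "g k t1 / g k u \<le> R k"
    by (rule ratio_bound[of "Q/2"]) (use Q0 k Aju in auto)
  have "Bd k t1 \<le> - \<mu>A k * A k t1 + \<beta> k * exp (- \<mu>J k * \<tau> k t1) * R k * A k u"
    using Bd_le[OF rat[unfolded u_def]] unfolding u_def .
  also have "\<beta> k * exp (- \<mu>J k * \<tau> k t1) * R k * A k u \<le> max (\<mu>A k / 4 * Q) (\<beta> k * R k * max (Kb k) \<Phi>)"
    unfolding u_def
    by (rule term_bound[OF k(2) _ _ Phi(1)]) (use Aju neg[of u k] ulow in \<open>auto simp: u_def\<close>)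
  finally have "Bd k t1 \<le> - \<mu>A k * A k t1 + max (\<mu>A k / 4 * Q) (\<beta> k * R k * max (Kb k) \<Phi>)"
    by simp
  moreover have "\<mu>A k * Q \<le> \<mu>A k * A k t1" using k params[of k] by simp
  moreover have "max (\<mu>A k / 4 * Q) (\<beta> k * R k * max (Kb k) \<Phi>) < \<mu>A k * Q"
    using Qd[of k] params[of k] Rge[of k] Kbnn[of k] Q0 Phi
    by (auto simp: max_def intro: mult_nonneg_nonneg)
  ultimately have "Bd k t1 < 0" by linarith
  then obtain d where d: "d > 0" "\<And>h. h > 0 \<Longrightarrow> h < d \<Longrightarrow> A k t1 < A k (t1 - h)"
    using DERIV_neg_dec_left[OF A_deriv_at[OF t1p]] by blast
  define h where "h = min (d/2) (t1/2)"
  have "A k t1 < A k (t1 - h)" using d t1p unfolding h_def by (intro d(2)) auto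
  moreover have "A k (t1 - h) < Q" using t1p d unfolding h_def by (intro before) auto
  ultimately show False using k by simp
qed

end



lemma Max_range_le: "Max (range (h :: 'n::finite \<Rightarrow> real)) \<le> X \<longleftrightarrow> (\<forall>i. h i \<le> X)"
  by (subst Max_le_iff) auto
lemma Max_range_ge: "(h :: 'n::finite \<Rightarrow> real) i \<le> Max (range h)"
  by (rule Max_ge) auto

context bnd begin

lemma global_bound: "\<exists>Q. \<forall>i j v. - \<tau>0 i \<le> v \<longrightarrow> A j v \<le> Q"
proof -
  define T0 where "T0 = (\<Sum>i\<in>UNIV. \<tau>0 i)"
  have T0: "\<tau>0 i \<le> T0" for i unfolding T0_def by (rule member_le_sum) (auto intro: tau0)
  have "\<forall>j. \<exists>B. B \<ge> 0 \<and> (\<forall>v\<in>{-T0..0}. norm (A j v) \<le> B)"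
  proof
    fix j
    obtain B where "B \<ge> 0" "\<And>v. v \<in> {-T0..0} \<Longrightarrow> norm (A j v) \<le> B"
      using continuous_on_compact_bound[OF compact_Icc continuous_on_subset[OF A_cont[of j]]] by blast
    then show "\<exists>B. B \<ge> 0 \<and> (\<forall>v\<in>{-T0..0}. norm (A j v) \<le> B)" by blast
  qed
  then obtain Bf where Bf: "\<And>j. Bf j \<ge> 0" "\<And>j v. v \<in> {-T0..0} \<Longrightarrow> norm (A j v) \<le> Bf j"
    by metis
  define \<Phi> where "\<Phi> = (\<Sum>j\<in>UNIV. Bf j)"
  have Phi0: "\<Phi> \<ge> 0" unfolding \<Phi>_def by (rule sum_nonneg) (use Bf in auto)
  have neg2: "A j v \<le> \<Phi>" if "v \<le> 0" "- \<tau>0 i \<le> v" for j i v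
  proof -
    have "A j v \<le> norm (A j v)" by simp
    also have "\<dots> \<le> Bf j" using Bf(2)[of v j] that T0[of i] by auto
    also have "\<dots> \<le> \<Phi>" unfolding \<Phi>_def by (rule member_le_sum) (use Bf in auto)
    finally show ?thesis .
  qed
  define Q where "Q = \<Phi> + 1 + (\<Sum>i\<in>UNIV. 4 * \<beta> i * R i * (Kb i + \<Phi>) / \<mu>A i)"
  have termnn: "0 \<le> 4 * \<beta> i * R i * (Kb i + \<Phi>) / \<mu>A i" for i
    using params[of i] Rge[of i] Kbnn[of i] Phi0 by (intro divide_nonneg_nonneg mult_nonneg_nonneg) auto
  have Qge: "Q \<ge> \<Phi> + 1 + 4 * \<beta> i * R i * (Kb i + \<Phi>) / \<mu>A i" for i
    unfolding Q_def using member_le_sum[of i UNIV "\<lambda>i. 4 * \<beta> i * R i * (Kb i + \<Phi>) / \<mu>A i"] termnn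
    by auto
  have Qd: "\<mu>A i / 4 * Q + \<beta> i * R i * max (Kb i) \<Phi> < \<mu>A i * Q" for i
  proof -
    have mu: "\<mu>A i > 0" using params by auto
    have "\<mu>A i * Q \<ge> \<mu>A i * (\<Phi> + 1 + 4 * \<beta> i * R i * (Kb i + \<Phi>) / \<mu>A i)"
      using Qge[of i] mu by (intro mult_left_mono) auto
    also have "\<mu>A i * (\<Phi> + 1 + 4 * \<beta> i * R i * (Kb i + \<Phi>) / \<mu>A i)
       = \<mu>A i * (\<Phi> + 1) + 4 * (\<beta> i * R i * (Kb i + \<Phi>))" using mu by (simp add: field_simps)
    finally have a: "\<mu>A i * Q \<ge> \<mu>A i * (\<Phi> + 1) + 4 * (\<beta> i * R i * (Kb i + \<Phi>))" .
    have b: "\<beta> i * R i * max (Kb i) \<Phi> \<le> \<beta> i * R i * (Kb i + \<Phi>)"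
      using params[of i] Rge[of i] Kbnn[of i] Phi0 by (intro mult_left_mono) auto
    have c: "0 \<le> \<beta> i * R i * max (Kb i) \<Phi>"
      using params[of i] Rge[of i] Kbnn[of i] Phi0 by auto
    have d: "\<mu>A i * (\<Phi> + 1) > 0" using mu Phi0 by simp
    show ?thesis using a b c d by linarith
  qed
  have Phi_lt: "\<Phi> < Q" using Qge[of undefined] termnn[of undefined] by linarith
  have pos: "A j s < Q" if "s \<ge> 0" for j s
    using first_passage_contra[OF Qd Phi0 Phi_lt, of j s] neg2 tau0 that by force
  show ?thesis
  proof (intro exI allI impI)
    fix i j v assume "- \<tau>0 i \<le> v"
    then show "A j v \<le> Q" using pos[of v j] neg2[of v i j] Phi_lt by (cases "v \<ge> 0") auto
  qed
qed

end



context bnd begin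

lemma limsup_bound:
  assumes Mge: "\<And>i. 3 * \<beta> i * R i * Kb i / \<mu>A i \<le> M"
  shows "Limsup at_top (\<lambda>t. ereal (Max (range (\<lambda>i. A i t)))) \<le> ereal M"
proof (rule ccontr)
  define Y where "Y = (\<lambda>t. ereal (Max (range (\<lambda>i. A i t))))"
  assume "\<not> Limsup at_top (\<lambda>t. ereal (Max (range (\<lambda>i. A i t)))) \<le> ereal M"
  then have gtM: "ereal M < Limsup at_top Y" unfolding Y_def by simp
  obtain Q where Q: "\<And>i j v. - \<tau>0 i \<le> v \<Longrightarrow> A j v \<le> Q" using global_bound by blast
  have Qp: "A j v \<le> Q" if "v \<ge> 0" for j v
  proof -
    have "- \<tau>0 undefined \<le> v" using tau0[of undefined] that by linarith
    then show ?thesis by (rule Q)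
  qed
  have "eventually (\<lambda>t. Y t \<le> ereal Q) at_top"
    unfolding Y_def eventually_at_top_linorder
    by (intro exI[of _ 0]) (auto simp: Max_range_le intro: Qp simp del: Max_le_iff)
  then have LQ: "Limsup at_top Y \<le> ereal Q" by (rule Limsup_bounded)
  obtain p where p: "Limsup at_top Y = ereal p" using gtM LQ by (cases "Limsup at_top Y") auto
  have pM: "M < p" using gtM p by simp
  have "0 \<le> 3 * \<beta> undefined * R undefined * Kb undefined / \<mu>A undefined"
    using params[of undefined] Rge[of undefined] Kbnn[of undefined]
    by (intro divide_nonneg_nonneg mult_nonneg_nonneg) auto
  then have M0: "0 \<le> M" using Mge[of undefined] by linarith
  have p0: "p > 0" using pM M0 by simp
  have "eventually (\<lambda>t. Y t < ereal (4 * p / 3)) at_top"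
    by (rule Limsup_lessD) (use p p0 in simp)
  then obtain T1 where T1': "\<And>t. t \<ge> T1 \<Longrightarrow> Y t < ereal (4 * p / 3)"
    unfolding eventually_at_top_linorder by blast
  have T1: "A j t < 4 * p / 3" if "t \<ge> T1" for t j
  proof -
    have "Max (range (\<lambda>i. A i t)) < 4 * p / 3" using T1'[OF that] unfolding Y_def by simp
    then show ?thesis using Max_range_ge[of "\<lambda>i. A i t" j] by linarith
  qed
  define C\<tau> where "C\<tau> = (\<Sum>i\<in>UNIV. c i / f i (S i * Q))"
  have tauC: "\<tau> i t \<le> C\<tau>" if "t \<ge> 0" for i t
  proof -
    have "\<tau> i t * f i (S i * Q) \<le> c i" by (rule tau_upper[OF that]) (use Q in auto)
    then have "\<tau> i t \<le> c i / f i (S i * Q)" using f_pos by (simp add: pos_le_divide_eq)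
    also have "\<dots> \<le> C\<tau>" unfolding C\<tau>_def
      by (rule member_le_sum) (use cpos f_pos in \<open>auto intro: divide_nonneg_pos less_imp_le\<close>)
    finally show ?thesis .
  qed
  define T2 where "T2 = max T1 0 + C\<tau>"
  have C0: "C\<tau> \<ge> 0" using tauC[of 0 undefined] tau_nn[of 0 undefined] by simp
  have below: "\<exists>T'. \<forall>s\<ge>T'. A i s \<le> 2 * p / 3" for i
  proof (rule eventually_below[OF A_cont, of "\<mu>A i * p / 3" T2])
    show "\<mu>A i * p / 3 > 0" using params[of i] p0 by simp
    fix z assume z: "z > T2" "2 * p / 3 \<le> A i z"
    have z0: "z > 0" "z \<ge> 0" using z C0 unfolding T2_def by auto
    define u where "u = z - \<tau> i z"
    have u: "u \<ge> T1" "u \<ge> 0" using tauC[OF z0(2), of i] z unfolding u_def T2_def by auto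
    have rat: "g i z / g i u \<le> R i"
      by (rule ratio_bound[of "2 * p / 3"]) (use p0 z T1[OF u(1)] less_imp_le in auto)
    have "Bd i z \<le> - \<mu>A i * A i z + \<beta> i * exp (- \<mu>J i * \<tau> i z) * R i * A i u"
      using Bd_le[OF rat[unfolded u_def]] unfolding u_def .
    also have "\<beta> i * exp (- \<mu>J i * \<tau> i z) * R i * A i u \<le> max (\<mu>A i / 4 * (4 * p / 3)) (\<beta> i * R i * max (Kb i) 0)"
      unfolding u_def
      by (rule term_bound[OF z0(2)]) (use T1[OF u(1), of i] u in \<open>auto simp: u_def\<close>)
    also have "max (\<mu>A i / 4 * (4 * p / 3)) (\<beta> i * R i * max (Kb i) 0) \<le> \<mu>A i * p / 3"
    proof -
      have "3 * \<beta> i * R i * Kb i / \<mu>A i \<le> p" using Mge[of i] pM by simp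
      then have "\<beta> i * R i * Kb i \<le> \<mu>A i * p / 3" using params[of i] by (simp add: field_simps)
      then show ?thesis using Kbnn[of i] by (simp add: max_def)
    qed
    finally have "Bd i z \<le> - \<mu>A i * A i z + \<mu>A i * p / 3" by simp
    moreover have "\<mu>A i * (2 * p / 3) \<le> \<mu>A i * A i z" using z params[of i] by simp
    ultimately have "Bd i z \<le> - (\<mu>A i * p / 3)" by simp
    then show "\<exists>D. (A i has_real_derivative D) (at z) \<and> D \<le> - (\<mu>A i * p / 3)"
      using A_deriv_at[OF z0(1)] by blast
  qed
  have "eventually (\<lambda>s. A i s \<le> 2 * p / 3) at_top" for i
    using below[of i] unfolding eventually_at_top_linorder by blast
  then have "eventually (\<lambda>s. \<forall>i. A i s \<le> 2 * p / 3) at_top" by (rule eventually_all_finite)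
  then have "eventually (\<lambda>s. Y s \<le> ereal (2 * p / 3)) at_top"
  proof eventually_elim
    case (elim s)
    then have "Max (range (\<lambda>i. A i s)) \<le> 2 * p / 3" using Max_range_le by blast
    then show ?case unfolding Y_def by simp
  qed
  then have "Limsup at_top Y \<le> ereal (2 * p / 3)" by (rule Limsup_bounded)
  then show False using p p0 by simp
qed

end



lemma consts_exist:
  fixes \<mu>A \<mu>J \<beta> :: "'n::finite \<Rightarrow> real" and \<zeta> :: "'n \<Rightarrow> 'n \<Rightarrow> real" and f :: "'n \<Rightarrow> real \<Rightarrow> real"
  assumes AA: "assumptionA \<mu>A \<mu>J \<beta> \<zeta> f" and dpos: "\<delta> > 0"
  shows "\<exists>R L Kb. (\<forall>i. R i \<ge> 1) \<and>
     (\<forall>i x. x \<ge> 0 \<longrightarrow> f i x / f i ((2 * (\<Sum>j\<in>UNIV. \<zeta> i j) / \<zeta> i i) * x) \<le> R i) \<and>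
     (\<forall>i. L i > 0) \<and> (\<forall>i. \<beta> i * R i * exp (- \<mu>J i * L i) \<le> \<mu>A i / 4) \<and>
     (\<forall>i. Kb i \<ge> 0) \<and> (\<forall>i. L i * f i (\<zeta> i i * Kb i * exp (- \<mu>A i * L i)) < \<delta>)"
proof -
  have "\<exists>r l k. r \<ge> 1 \<and>
     (\<forall>x. x \<ge> 0 \<longrightarrow> f i x / f i ((2 * (\<Sum>j\<in>UNIV. \<zeta> i j) / \<zeta> i i) * x) \<le> r) \<and>
     l > 0 \<and> \<beta> i * r * exp (- \<mu>J i * l) \<le> \<mu>A i / 4 \<and>
     k \<ge> 0 \<and> l * f i (\<zeta> i i * k * exp (- \<mu>A i * l)) < \<delta>" for i
  proof -
    have pa: "\<mu>A i > 0" "\<mu>J i > 0" "\<beta> i > 0" "\<zeta> i i > 0" "\<forall>j. \<zeta> i j \<ge> 0"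
      using AA unfolding assumptionA_def by auto
    have "\<zeta> i i \<le> (\<Sum>j\<in>UNIV. \<zeta> i j)"
      by (rule member_le_sum) (use pa in auto)
    then have c1: "2 * (\<Sum>j\<in>UNIV. \<zeta> i j) / \<zeta> i i \<ge> 1" using pa by (simp add: field_simps)
    obtain K where K: "\<forall>x\<ge>0. f i x / f i ((2 * (\<Sum>j\<in>UNIV. \<zeta> i j) / \<zeta> i i) * x) \<le> K"
      using AA c1 unfolding assumptionA_def by blast
    define r where "r = max K 1"
    have r: "r \<ge> 1" "\<forall>x\<ge>0. f i x / f i ((2 * (\<Sum>j\<in>UNIV. \<zeta> i j) / \<zeta> i i) * x) \<le> r"
      using K unfolding r_def by (auto intro: order_trans)
    define q where "q = \<mu>A i / (4 * \<beta> i * r)"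
    have q: "q > 0" using pa r unfolding q_def by simp
    define l where "l = \<bar>ln q\<bar> / \<mu>J i + 1"
    have l: "l > 0" using pa unfolding l_def by (simp add: add_nonneg_pos)
    have "- \<mu>J i * l = - \<bar>ln q\<bar> - \<mu>J i" using pa unfolding l_def by (simp add: field_simps)
    then have "- \<mu>J i * l \<le> ln q" using pa by linarith
    then have "exp (- \<mu>J i * l) \<le> q" using q by (metis exp_le_cancel_iff exp_ln)
    then have "\<beta> i * r * exp (- \<mu>J i * l) \<le> \<beta> i * r * q" using pa r by (intro mult_left_mono) auto
    also have "\<dots> = \<mu>A i / 4" using pa r unfolding q_def by (simp add: field_simps)
    finally have lb: "\<beta> i * r * exp (- \<mu>J i * l) \<le> \<mu>A i / 4" .
    have "(f i \<longlongrightarrow> 0) at_top" using AA unfolding assumptionA_def by auto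
    then have "eventually (\<lambda>y. f i y < \<delta> / l) at_top"
      by (rule order_tendstoD(2)) (use dpos l in simp)
    then obtain Y where Y: "\<And>y. y \<ge> Y \<Longrightarrow> f i y < \<delta> / l" unfolding eventually_at_top_linorder by blast
    define k where "k = max Y 0 * exp (\<mu>A i * l) / \<zeta> i i"
    have k0: "k \<ge> 0" using pa unfolding k_def by simp
    have "\<zeta> i i * k * exp (- \<mu>A i * l) = max Y 0"
      using pa unfolding k_def by (simp add: field_simps flip: exp_add)
    then have "f i (\<zeta> i i * k * exp (- \<mu>A i * l)) < \<delta> / l" using Y by simp
    then have "l * f i (\<zeta> i i * k * exp (- \<mu>A i * l)) < \<delta>" using l by (simp add: field_simps)
    then show ?thesis using r l lb k0 by blast
  qed
  then obtain R L Kb where "\<And>i. R i \<ge> 1 \<and>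
     (\<forall>x. x \<ge> 0 \<longrightarrow> f i x / f i ((2 * (\<Sum>j\<in>UNIV. \<zeta> i j) / \<zeta> i i) * x) \<le> R i) \<and>
     L i > 0 \<and> \<beta> i * R i * exp (- \<mu>J i * L i) \<le> \<mu>A i / 4 \<and>
     Kb i \<ge> 0 \<and> L i * f i (\<zeta> i i * Kb i * exp (- \<mu>A i * L i)) < \<delta>"
    by metis
  then show ?thesis by blast
qed




lemma lip_glue:
  fixes w :: "real \<Rightarrow> real"
  assumes p2: "\<And>x y. x \<le> -t \<Longrightarrow> y \<le> -t \<Longrightarrow> \<bar>w x - w y\<bar> \<le> L * \<bar>x - y\<bar>"
    and p1: "\<And>x y. x \<in> {-t..0} \<Longrightarrow> y \<in> {-t..0} \<Longrightarrow> \<bar>w x - w y\<bar> \<le> L * \<bar>x - y\<bar>"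
    and L: "L \<ge> 0" and t: "t \<ge> 0"
  shows "L-lipschitz_on {..0} w"
proof (rule lipschitz_on_leI[OF _ L])
  fix x y :: real assume xy: "x \<in> {..0}" "y \<in> {..0}" "x \<le> y"
  consider "y \<le> -t" | "x \<ge> -t" | "x < -t" "-t < y" by linarith
  then show "dist (w x) (w y) \<le> L * dist x y"
  proof cases
    case 1 then show ?thesis using p2[of x y] xy by (simp add: dist_real_def)
  next
    case 2 then show ?thesis using p1[of x y] xy by (simp add: dist_real_def)
  next
    case 3
    have "\<bar>w x - w y\<bar> \<le> \<bar>w x - w (-t)\<bar> + \<bar>w (-t) - w y\<bar>" by simp
    also have "\<dots> \<le> L * \<bar>x - (-t)\<bar> + L * \<bar>(-t) - y\<bar>"
      using p2[of x "-t"] p1[of "-t" y] 3 xy t by (intro add_mono) auto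
    also have "\<dots> = L * \<bar>x - y\<bar>" using 3 by (simp add: algebra_simps)
    finally show ?thesis by (simp add: dist_real_def)
  qed
qed

lemma exp_lip:
  assumes "\<alpha> > 0" "x \<le> 0" "y \<le> (0::real)"
  shows "\<bar>exp (\<alpha> * x) - exp (\<alpha> * y)\<bar> \<le> \<alpha> * \<bar>x - y\<bar>"
proof -
  have "norm (exp (\<alpha> * x) - exp (\<alpha> * y)) \<le> \<alpha> * norm (x - y)"
  proof (rule field_differentiable_bound[of "{..0}" "\<lambda>x. exp (\<alpha> * x)" "\<lambda>z. \<alpha> * exp (\<alpha> * z)"])
    show "convex {..0::real}" by simp
    fix z :: real assume z: "z \<in> {..0}"
    show "((\<lambda>x. exp (\<alpha> * x)) has_field_derivative \<alpha> * exp (\<alpha> * z)) (at z within {..0})"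
      by (auto intro!: derivative_eq_intros)
    have "exp (\<alpha> * z) \<le> 1" using z assms by (simp add: mult_nonneg_nonpos)
    then show "norm (\<alpha> * exp (\<alpha> * z)) \<le> \<alpha>" using assms by (simp add: mult_left_le)
  qed (use assms in auto)
  then show ?thesis by simp
qed

context sys begin

lemma comp_bound: "\<exists>Cb\<ge>0. \<forall>j v. v \<in> {a..b} \<longrightarrow> \<bar>A j v\<bar> \<le> Cb"
proof -
  have "\<forall>j. \<exists>B. B \<ge> 0 \<and> (\<forall>v\<in>{a..b}. norm (A j v) \<le> B)"
  proof
    fix j
    obtain B where "B \<ge> 0" "\<And>v. v \<in> {a..b} \<Longrightarrow> norm (A j v) \<le> B"
      using continuous_on_compact_bound[OF compact_Icc continuous_on_subset[OF A_cont[of j]]] by blast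
    then show "\<exists>B. B \<ge> 0 \<and> (\<forall>v\<in>{a..b}. norm (A j v) \<le> B)" by blast
  qed
  then obtain Bf where Bf: "\<And>j. Bf j \<ge> 0" "\<And>j v. v \<in> {a..b} \<Longrightarrow> norm (A j v) \<le> Bf j"
    by metis
  have "\<bar>A j v\<bar> \<le> (\<Sum>j\<in>UNIV. Bf j)" if "v \<in> {a..b}" for j v
    using Bf(2)[OF that, of j] member_le_sum[of j UNIV Bf] Bf(1) by auto
  moreover have "(\<Sum>j\<in>UNIV. Bf j) \<ge> 0" by (rule sum_nonneg) (use Bf in auto)
  ultimately show ?thesis by blast
qed

lemma A_lip: assumes t: "t \<ge> 0"
  shows "\<exists>C Cb. C \<ge> 0 \<and> Cb \<ge> 0 \<and> (\<forall>x\<in>{0..t}. \<forall>y\<in>{0..t}. \<bar>A i x - A i y\<bar> \<le> C * \<bar>x - y\<bar>)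
     \<and> (\<forall>v\<in>{0..t}. \<bar>A i v\<bar> \<le> Cb)"
proof -
  obtain Cb where Cb: "Cb \<ge> 0" "\<And>j v. v \<in> {- \<tau>0 i..t} \<Longrightarrow> \<bar>A j v\<bar> \<le> Cb"
    using comp_bound[of "- \<tau>0 i" t] by blast
  define C where "C = \<mu>A i * Cb + \<beta> i * (f i 0 / f i (S i * Cb)) * Cb"
  have pa: "\<mu>A i > 0" "\<mu>J i > 0" "\<beta> i > 0" using params by auto
  have C0: "C \<ge> 0" unfolding C_def using pa Cb f_pos[of i] f_pos[of i 0]
    by (intro add_nonneg_nonneg mult_nonneg_nonneg divide_nonneg_nonneg) (auto intro: less_imp_le)
  have Bdb: "\<bar>Bd i s\<bar> \<le> C" if s: "s \<in> {0..t}" for s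
  proof -
    define u where "u = s - \<tau> i s"
    have u: "- \<tau>0 i \<le> u" "u \<le> s" using a_lower[of s i] tau_nn[of s i] s unfolding u_def by auto
    have Au: "0 \<le> A i u" "A i u \<le> Cb" using A_nn Cb(2)[of u i] u s by auto
    have As: "0 \<le> A i s" "A i s \<le> Cb" using A_nn Cb(2)[of s i] s tau0[of i] by auto
    have e1: "0 \<le> exp (- \<mu>J i * \<tau> i s)" "exp (- \<mu>J i * \<tau> i s) \<le> 1"
      using tau_nn[of s i] s pa by auto
    have gu: "f i (S i * Cb) \<le> g i u" unfolding g_def
    proof (rule f_dec)
      show "Zfun \<zeta> A i u \<le> S i * Cb"
      proof (rule Z_le)
        fix j show "A j u \<le> Cb" using Cb(2)[of u j] u s by (auto simp: abs_le_iff)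
      qed
    qed
    have "g i s / g i u \<le> f i 0 / f i (S i * Cb)"
      by (rule frac_le) (use g_le0 f_pos g_pos gu in \<open>auto intro: less_imp_le\<close>)
    define br where "br = \<beta> i * exp (- \<mu>J i * \<tau> i s) * (g i s / g i u) * A i u"
    have br0: "0 \<le> br" unfolding br_def using pa e1 g_pos[of i s] g_pos[of i u] Au by auto
    have "br \<le> \<beta> i * 1 * (f i 0 / f i (S i * Cb)) * Cb" unfolding br_def
      using pa e1 Au g_pos[of i s] g_pos[of i u] \<open>g i s / g i u \<le> f i 0 / f i (S i * Cb)\<close>
        f_pos[of i 0] f_pos[of i "S i * Cb"]
      by (intro mult_mono) (auto intro: less_imp_le)
    then have "br \<le> \<beta> i * (f i 0 / f i (S i * Cb)) * Cb" by simp
    moreover have "Bd i s = - \<mu>A i * A i s + br" unfolding Bd_def br_def u_def by simp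
    moreover have "\<mu>A i * A i s \<le> \<mu>A i * Cb" using pa As by simp
    moreover have "0 \<le> \<mu>A i * A i s" using pa As by simp
    moreover have "0 \<le> \<beta> i * (f i 0 / f i (S i * Cb)) * Cb"
      using pa Cb(1) f_pos[of i 0] f_pos[of i "S i * Cb"] by auto
    ultimately have "Bd i s \<le> C" "- Bd i s \<le> C" unfolding C_def using br0 by linarith+
    then show ?thesis by (simp add: abs_le_iff)
  qed
  have lip: "\<bar>A i x - A i y\<bar> \<le> C * \<bar>x - y\<bar>" if "x \<in> {0..t}" "y \<in> {0..t}" for x y
  proof -
    have "norm (A i x - A i y) \<le> C * norm (x - y)"
    proof (rule field_differentiable_bound[of "{0..t}" "A i" "Bd i"])
      fix z assume z: "z \<in> {0..t}"
      show "(A i has_field_derivative Bd i z) (at z within {0..t})"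
        by (rule DERIV_subset[OF A_deriv]) (use z in auto)
      show "norm (Bd i z) \<le> C" using Bdb[OF z] by simp
    qed (use that in auto)
    then show ?thesis by simp
  qed
  have "\<forall>v\<in>{0..t}. \<bar>A i v\<bar> \<le> Cb" using Cb(2) tau0[of i] by auto
  then show ?thesis using C0 Cb(1) lip by blast
qed

lemma shift_X:
  assumes phi: "\<phi> i \<in> X_space \<alpha>" and al: "\<alpha> > 0" and t: "t \<ge> 0"
  shows "(\<lambda>\<theta>. A i (t + \<theta>)) \<in> X_space \<alpha>"
proof -
  define w where "w = (\<lambda>\<theta>. exp (- \<alpha> * \<bar>\<theta>\<bar>) * A i (t + \<theta>))"
  define w\<phi> where "w\<phi> = (\<lambda>\<theta>. exp (- \<alpha> * \<bar>\<theta>\<bar>) * \<phi> i \<theta>)"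
  obtain L\<phi> where L\<phi>: "L\<phi>-lipschitz_on {..0} w\<phi>" using phi unfolding X_space_def w\<phi>_def by blast
  have "bounded (w\<phi> ` {..0})" using phi unfolding X_space_def w\<phi>_def by blast
  then obtain B\<phi> where B\<phi>: "\<And>x. x \<le> 0 \<Longrightarrow> \<bar>w\<phi> x\<bar> \<le> B\<phi>" unfolding bounded_iff by auto
  obtain C Cb where CC: "C \<ge> 0" "Cb \<ge> 0" "\<And>x y. x\<in>{0..t} \<Longrightarrow> y\<in>{0..t} \<Longrightarrow> \<bar>A i x - A i y\<bar> \<le> C * \<bar>x - y\<bar>"
    "\<And>v. v\<in>{0..t} \<Longrightarrow> \<bar>A i v\<bar> \<le> Cb"
    using A_lip[OF t, of i] by blast
  have L\<phi>0: "L\<phi> \<ge> 0" using lipschitz_on_nonneg[OF L\<phi>] .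
  have w2: "w \<theta> = exp (- \<alpha> * t) * w\<phi> (\<theta> + t)" if "\<theta> \<le> -t" for \<theta>
  proof -
    have "exp (- \<alpha> * \<bar>\<theta>\<bar>) = exp (- \<alpha> * t) * exp (- \<alpha> * \<bar>\<theta> + t\<bar>)"
      using that t by (simp add: algebra_simps flip: exp_add)
    moreover have "A i (t + \<theta>) = \<phi> i (\<theta> + t)" using A_init[of "t + \<theta>" i] that by (simp add: add.commute)
    ultimately show ?thesis unfolding w_def w\<phi>_def by simp
  qed
  have w1: "w \<theta> = exp (\<alpha> * \<theta>) * A i (t + \<theta>)" if "\<theta> \<le> 0" for \<theta>
    using that unfolding w_def by simp
  define Lw where "Lw = L\<phi> + C + \<alpha> * Cb"
  have Lw0: "Lw \<ge> 0" unfolding Lw_def using L\<phi>0 CC al by simp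
  have lipw: "Lw-lipschitz_on {..0} w"
  proof (rule lip_glue[OF _ _ Lw0 t])
    fix x y assume xy: "x \<le> -t" "y \<le> -t"
    have "\<bar>w x - w y\<bar> = exp (- \<alpha> * t) * \<bar>w\<phi> (x + t) - w\<phi> (y + t)\<bar>"
      using w2[OF xy(1)] w2[OF xy(2)] by (simp add: abs_mult flip: right_diff_distrib)
    also have "\<dots> \<le> 1 * (L\<phi> * \<bar>(x + t) - (y + t)\<bar>)"
      using lipschitz_onD[OF L\<phi>, of "x + t" "y + t"] xy t al
      by (intro mult_mono) (auto simp: dist_real_def mult_nonneg_nonneg)
    also have "\<dots> = L\<phi> * \<bar>x - y\<bar>" by simp
    also have "\<dots> \<le> Lw * \<bar>x - y\<bar>" unfolding Lw_def using CC al
      by (intro mult_right_mono) auto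
    finally show "\<bar>w x - w y\<bar> \<le> Lw * \<bar>x - y\<bar>" .
  next
    fix x y assume xy: "x \<in> {-t..0}" "y \<in> {-t..0}"
    have ex: "0 \<le> exp (\<alpha> * x)" "exp (\<alpha> * x) \<le> 1" using xy al by (auto simp: mult_nonneg_nonpos)
    have "w x - w y = exp (\<alpha> * x) * (A i (t + x) - A i (t + y)) + A i (t + y) * (exp (\<alpha> * x) - exp (\<alpha> * y))"
      using w1[of x] w1[of y] xy by (simp add: algebra_simps)
    then have "\<bar>w x - w y\<bar> \<le> \<bar>exp (\<alpha> * x) * (A i (t + x) - A i (t + y))\<bar> + \<bar>A i (t + y) * (exp (\<alpha> * x) - exp (\<alpha> * y))\<bar>"
      by (simp only: abs_triangle_ineq)
    also have "\<dots> = exp (\<alpha> * x) * \<bar>A i (t + x) - A i (t + y)\<bar> + \<bar>A i (t + y)\<bar> * \<bar>exp (\<alpha> * x) - exp (\<alpha> * y)\<bar>"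
      by (simp only: abs_mult abs_exp_cancel)
    also have "\<dots> \<le> 1 * (C * \<bar>x - y\<bar>) + Cb * (\<alpha> * \<bar>x - y\<bar>)"
      using ex CC(3)[of "t + x" "t + y"] CC(4)[of "t + y"] exp_lip[OF al, of x y] xy
      by (intro add_mono mult_mono) auto
    also have "\<dots> \<le> Lw * \<bar>x - y\<bar>" unfolding Lw_def using L\<phi>0 by (simp add: algebra_simps)
    finally show "\<bar>w x - w y\<bar> \<le> Lw * \<bar>x - y\<bar>" .
  qed
  have bw: "bounded (w ` {..0})"
    unfolding bounded_iff
  proof (intro exI[of _ "B\<phi> + Cb"] ballI)
    fix z assume "z \<in> w ` {..0}"
    then obtain \<theta> where th: "\<theta> \<le> 0" "z = w \<theta>" by auto
    show "norm z \<le> B\<phi> + Cb"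
    proof (cases "\<theta> \<le> -t")
      case True
      have "\<bar>w \<theta>\<bar> = exp (- \<alpha> * t) * \<bar>w\<phi> (\<theta> + t)\<bar>" using w2[OF True] by (simp add: abs_mult)
      also have "\<dots> \<le> 1 * B\<phi>" using B\<phi>[of "\<theta> + t"] True al t
        by (intro mult_mono) (auto simp: mult_nonneg_nonneg)
      finally show ?thesis using th CC(2) by simp
    next
      case False
      have "\<bar>w \<theta>\<bar> = exp (\<alpha> * \<theta>) * \<bar>A i (t + \<theta>)\<bar>" using w1[OF th(1)] by (simp add: abs_mult)
      also have "\<dots> \<le> 1 * Cb" using CC(4)[of "t + \<theta>"] False th al
        by (intro mult_mono) (auto simp: mult_nonneg_nonpos)
      finally have "\<bar>w \<theta>\<bar> \<le> Cb" by simp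
      moreover have "0 \<le> B\<phi>" using B\<phi>[of 0] by simp
      ultimately show ?thesis using th by simp
    qed
  qed
  have "continuous_on {..0} (\<lambda>\<theta>. A i (t + \<theta>))"
    by (intro continuous_on_compose2[OF A_cont[of i]] continuous_intros) auto
  then show ?thesis unfolding X_space_def
    using lipw bw lipschitz_on_uniformly_continuous[OF lipw] unfolding w_def by blast
qed

lemma shift_int: assumes t: "t \<ge> 0"
  shows "integral {- \<tau> i t..0} (\<lambda>\<sigma>. f i (Zfun \<zeta> (\<lambda>i \<theta>. A i (t + \<theta>)) i \<sigma>)) = c i"
proof -
  have "(\<lambda>\<sigma>. f i (Zfun \<zeta> (\<lambda>i \<theta>. A i (t + \<theta>)) i \<sigma>)) = g i \<circ> (+) t"
    unfolding g_def Zfun_def by (auto simp: add.commute)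
  then have "integral {- \<tau> i t..0} (\<lambda>\<sigma>. f i (Zfun \<zeta> (\<lambda>i \<theta>. A i (t + \<theta>)) i \<sigma>))
     = integral {- \<tau> i t + t..0 + t} (g i)" by (simp only: integral_shift_Icc_real)
  also have "\<dots> = c i" using int_eq[OF t, of i] by (simp add: add.commute)
  finally show ?thesis .
qed

end



theorem mainTheorem8:
  fixes \<mu>A \<mu>J \<beta> :: "'n::finite \<Rightarrow> real" and \<zeta> :: "'n \<Rightarrow> 'n \<Rightarrow> real"
    and f :: "'n \<Rightarrow> real \<Rightarrow> real" and \<alpha> :: real
  assumes "assumptionA \<mu>A \<mu>J \<beta> \<zeta> f" and "\<alpha> > 0"
  shows "(\<forall>\<delta>\<ge>0. \<forall>\<phi> \<tau>0 A \<tau>. (\<phi>, \<tau>0) \<in> D_set \<alpha> \<zeta> f \<delta> \<longrightarrow>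
            is_solution \<mu>A \<mu>J \<beta> \<zeta> f \<phi> \<tau>0 A \<tau> \<longrightarrow>
            (\<forall>t\<ge>0. ((\<lambda>i \<theta>. A i (t + \<theta>)), (\<lambda>i. \<tau> i t)) \<in> D_set \<alpha> \<zeta> f \<delta>))
       \<and> (\<forall>\<delta>>0. \<exists>M>0. \<forall>\<phi> \<tau>0 A \<tau>.
            (\<phi>, \<tau>0) \<in> D_set \<alpha> \<zeta> f \<delta> \<longrightarrow>
            (\<forall>i \<theta>. \<theta> \<le> 0 \<longrightarrow> \<phi> i \<theta> \<ge> 0) \<longrightarrow> (\<forall>i. \<tau>0 i > 0) \<longrightarrow>
            is_solution \<mu>A \<mu>J \<beta> \<zeta> f \<phi> \<tau>0 A \<tau> \<longrightarrow>
            Limsup at_top (\<lambda>t. ereal (Max (range (\<lambda>i. A i t)))) \<le> ereal M)"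
proof (intro conjI allI impI)
  fix \<delta> :: real and \<phi> \<tau>0 A \<tau> and t :: real
  assume d: "\<delta> \<ge> 0" and D: "(\<phi>, \<tau>0) \<in> D_set \<alpha> \<zeta> f \<delta>"
    and sol: "is_solution \<mu>A \<mu>J \<beta> \<zeta> f \<phi> \<tau>0 A \<tau>" and t: "t \<ge> 0"
  have D': "\<forall>i. \<phi> i \<in> X_space \<alpha>" "\<forall>i. \<tau>0 i \<ge> 0"
    "\<forall>i. integral {- \<tau>0 i..0} (\<lambda>\<sigma>. f i (Zfun \<zeta> \<phi> i \<sigma>)) \<ge> \<delta>"
    using D unfolding D_set_def by auto
  interpret sys \<mu>A \<mu>J \<beta> \<zeta> f \<phi> \<tau>0 A \<tau>
    by unfold_locales (use assms sol D' in auto)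
  show "((\<lambda>i \<theta>. A i (t + \<theta>)), (\<lambda>i. \<tau> i t)) \<in> D_set \<alpha> \<zeta> f \<delta>"
    unfolding D_set_def
    using shift_X[OF _ assms(2) t] D'(1) tau_nn[OF t] shift_int[OF t] D'(3) unfolding c_def
    by auto
next
  fix \<delta> :: real assume d: "\<delta> > 0"
  obtain R L Kb where C: "\<forall>i. R i \<ge> 1"
     "\<forall>i x. x \<ge> 0 \<longrightarrow> f i x / f i ((2 * (\<Sum>j\<in>UNIV. \<zeta> i j) / \<zeta> i i) * x) \<le> R i"
     "\<forall>i. L i > 0" "\<forall>i. \<beta> i * R i * exp (- \<mu>J i * L i) \<le> \<mu>A i / 4"
     "\<forall>i. Kb i \<ge> 0" "\<forall>i. L i * f i (\<zeta> i i * Kb i * exp (- \<mu>A i * L i)) < \<delta>"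
    using consts_exist[OF assms(1) d] by blast
  have pa: "\<And>i. \<mu>A i > 0 \<and> \<beta> i > 0" using assms(1) unfolding assumptionA_def by auto
  define M where "M = 1 + (\<Sum>i\<in>UNIV. 3 * \<beta> i * R i * Kb i / \<mu>A i)"
  have tnn: "0 \<le> 3 * \<beta> i * R i * Kb i / \<mu>A i" for i
    using pa[of i] C(1,5) by (intro divide_nonneg_nonneg mult_nonneg_nonneg) (auto intro: order_trans[of 0 1])
  have Mge: "3 * \<beta> i * R i * Kb i / \<mu>A i \<le> M" for i
    unfolding M_def using member_le_sum[of i UNIV "\<lambda>i. 3 * \<beta> i * R i * Kb i / \<mu>A i"] tnn by auto
  have M0: "M > 0" unfolding M_def using sum_nonneg[of UNIV "\<lambda>i. 3 * \<beta> i * R i * Kb i / \<mu>A i"] tnn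
    by auto
  show "\<exists>M>0. \<forall>\<phi> \<tau>0 A \<tau>.
            (\<phi>, \<tau>0) \<in> D_set \<alpha> \<zeta> f \<delta> \<longrightarrow>
            (\<forall>i \<theta>. \<theta> \<le> 0 \<longrightarrow> \<phi> i \<theta> \<ge> 0) \<longrightarrow> (\<forall>i. \<tau>0 i > 0) \<longrightarrow>
            is_solution \<mu>A \<mu>J \<beta> \<zeta> f \<phi> \<tau>0 A \<tau> \<longrightarrow>
            Limsup at_top (\<lambda>t. ereal (Max (range (\<lambda>i. A i t)))) \<le> ereal M"
  proof (intro exI[of _ M] conjI M0 allI impI)
    fix \<phi> \<tau>0 A \<tau>
    assume D: "(\<phi>, \<tau>0) \<in> D_set \<alpha> \<zeta> f \<delta>" and sol: "is_solution \<mu>A \<mu>J \<beta> \<zeta> f \<phi> \<tau>0 A \<tau>"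
    have D': "\<forall>i. \<tau>0 i \<ge> 0"
      "\<forall>i. integral {- \<tau>0 i..0} (\<lambda>\<sigma>. f i (Zfun \<zeta> \<phi> i \<sigma>)) \<ge> \<delta>"
      using D unfolding D_set_def by auto
    interpret bnd \<mu>A \<mu>J \<beta> \<zeta> f \<phi> \<tau>0 A \<tau> \<delta> R L Kb
      by unfold_locales (use assms sol D' C d in auto)
    show "Limsup at_top (\<lambda>t. ereal (Max (range (\<lambda>i. A i t)))) \<le> ereal M"
      by (rule limsup_bound[OF Mge])
  qed
qed


end
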